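(* Let $\lambda>0$ and let $\Sigma\in\mathbb{R}^{d\times d}$ ($d\ge 2$) be symmetric positive definite with simple spectrum $\sigma_1>\cdots>\sigma_d>0$ and unit eigenvectors $u_1,\dots,u_d$. Let \[ \mathcal{R}_{\mathrm{soft},\infty}(\mu)=\operatorname{tr}(\Sigma)-2\lambda\,\mu^\top\Sigma^2\mu+\lambda^2(\mu^\top\Sigma\mu)(\mu^\top\Sigma^2\mu). \] Then $\mathcal{R}_{\mathrm{soft},\infty}$ satisfies the Łojasiewicz inequality with exponent $1/2$ at each of its critical points. Moreover, let $\mu^\star\in\{\pm u_1/\sqrt{\lambda\sigma_1}\}$ and let $\mu_\infty$ be a solution of $\dot\mu_\infty=-\nabla\mathcal{R}_{\mathrm{soft},\infty}(\mu_\infty)$ with $\mu_\infty(t)\to\mu^\star$. Then there exist $t_0\ge0$ and $s>0$ such that for all $t\ge t_0$, \[ \mathcal{R}_{\mathrm{soft},\infty}(\mu_\infty(t))-\mathcal{R}_{\mathrm{soft},\infty}(\mu^\star)\le\big(\mathcal{R}_{\mathrm{soft},\infty}(\mu_\infty(t_0))-\mathcal{R}_{\mathrm{soft},\infty}(\mu^\star)\big)e^{-s(t-t_0)}, \] and for every sufficiently small $\varepsilon>0$ there exists $t_0>0$ such that $\|\mu_\infty(t)-\mu^\star\|=\mathcal{O}\big(e^{-(\tilde s-\varepsilon)(t-t_0)}\big)$ as $t\to\infty$, where \[ \tilde s=\sigma_{\min}\big(\nabla^2\mathcal{R}_{\mathrm{soft},\infty}(\mu^\star)\big)=2\lambda\min\{\sigma_2(\sigma_1-\sigma_2),\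 \sigma_d(\sigma_1-\sigma_d)\}>0. \]
   Context: A differentiable $f:\mathbb{R}^d\to\mathbb{R}$ satisfies the Łojasiewicz inequality with exponent $\alpha\in[0,1)$ at a critical point $\mu^\star$ if there exist $C>0$ and a neighborhood $U$ of $\mu^\star$ with $\|\nabla f(\mu)\|\ge C|f(\mu)-f(\mu^\star)|^\alpha$ for all $\mu\in U$. $\sigma_{\min}(A)$ denotes the smallest eigenvalue of a symmetric matrix $A$. *)

theory Defs
  imports "HOL-Analysis.Analysis" "HOL-Library.Landau_Symbols"
begin

definition gradient :: "(real^'n \<Rightarrow> real) \<Rightarrow> real^'n \<Rightarrow> real^'n" where
  "gradient f x = (THE g. (f has_derivative (\<lambda>h. g \<bullet> h)) (at x))"

definition hessian :: "(real^'n \<Rightarrow> real) \<Rightarrow> real^'n \<Rightarrow> real^'n^'n" where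
  "hessian f x = (\<chi> i j. gradient (\<lambda>y. gradient f y $ i) x $ j)"

definition sigma_min :: "real^'n^'n \<Rightarrow> real" where
  "sigma_min A = Min {c. \<exists>v. v \<noteq> 0 \<and> A *v v = c *\<^sub>R v}"

definition lojasiewicz :: "(real^'n \<Rightarrow> real) \<Rightarrow> real \<Rightarrow> real^'n \<Rightarrow> bool" where
  "lojasiewicz f \<alpha> x0 \<longleftrightarrow> (\<exists>C>0. \<exists>U. open U \<and> x0 \<in> U \<and>
      (\<forall>x\<in>U. norm (gradient f x) \<ge> C * \<bar>f x - f x0\<bar> powr \<alpha>))"

definition R_soft :: "real \<Rightarrow> real^'n^'n \<Rightarrow> real^'n \<Rightarrow> real" where
  "R_soft lam S \<mu> = trace S - 2 * lam * (\<mu> \<bullet> ((S ** S) *v \<mu>))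
     + lam\<^sup>2 * (\<mu> \<bullet> (S *v \<mu>)) * (\<mu> \<bullet> ((S ** S) *v \<mu>))"

end

theory Submission
  imports Defs
begin

lemma deriv_quad:
  fixes F :: "'a::real_normed_vector \<Rightarrow> 'b::real_normed_vector"
  assumes bl: "bounded_linear D"
    and K: "\<And>h. norm h \<le> 1 \<Longrightarrow> norm (F (x + h) - F x - D h) \<le> K * norm h ^ 2"
  shows "(F has_derivative D) (at x)"
  unfolding has_derivative_at_alt
proof (intro conjI allI impI bl)
  fix e :: real assume e: "e > 0"
  define K' where "K' = max K 1"
  have K'pos: "K' > 0" unfolding K'_def by simp
  define d where "d = min 1 (e / K')"
  have dpos: "d > 0" using e K'pos unfolding d_def by simp
  show "\<exists>d>0. \<forall>y. norm (y - x) < d \<longrightarrow> norm (F y - F x - D (y - x)) \<le> e * norm (y - x)"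
  proof (intro exI[of _ d] conjI allI impI dpos)
    fix y assume y: "norm (y - x) < d"
    let ?h = "y - x"
    have h1: "norm ?h \<le> 1" using y unfolding d_def by simp
    have "norm (F y - F x - D ?h) = norm (F (x + ?h) - F x - D ?h)" by simp
    also have "\<dots> \<le> K * norm ?h ^ 2" using K[OF h1] by simp
    also have "\<dots> \<le> K' * norm ?h ^ 2" unfolding K'_def
      by (intro mult_right_mono) auto
    also have "\<dots> = (K' * norm ?h) * norm ?h" by (simp add: power2_eq_square)
    also have "\<dots> \<le> e * norm ?h"
    proof (intro mult_right_mono)
      have "norm ?h \<le> e / K'" using y unfolding d_def by simp
      then show "K' * norm ?h \<le> e" using K'pos by (simp add: field_simps)
    qed simp
    finally show "norm (F y - F x - D (y - x)) \<le> e * norm (y - x)" .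
  qed
qed

lemma gradient_eqI:
  assumes "(f has_derivative (\<lambda>h. g \<bullet> h)) (at x)"
  shows "gradient f x = g"
  unfolding gradient_def
proof (rule the_equality[where P="\<lambda>g. (f has_derivative (\<lambda>h. g \<bullet> h)) (at x)", OF assms])
  fix g' assume "(f has_derivative (\<lambda>h. g' \<bullet> h)) (at x)"
  from has_derivative_unique[OF this assms]
  have "(\<lambda>h. g' \<bullet> h) = (\<lambda>h. g \<bullet> h)" .
  then have "g' \<bullet> (g' - g) = g \<bullet> (g' - g)" using fun_cong[of "\<lambda>h. g' \<bullet> h" "\<lambda>h. g \<bullet> h" "g' - g"] by simp
  then have "(g' - g) \<bullet> (g' - g) = 0" by (simp add: inner_diff_left inner_diff_right inner_commute)
  then show "g' = g" by simp
qed

definition outer :: "real^'n \<Rightarrow> real^'n \<Rightarrow> real^'n^'n" where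
  "outer a b = (\<chi> i j. a $ i * b $ j)"

lemma outer_mult: "outer a b *v h = (b \<bullet> h) *\<^sub>R a"
  by (simp add: outer_def matrix_vector_mult_def vec_eq_iff inner_vec_def sum_distrib_left mult_ac)

lemma matrix_row_inner: "(M *v h) $ i = (M $ i) \<bullet> h"
  by (simp add: matrix_vector_mult_def inner_vec_def mult_ac)

locale rs =
  fixes lam :: real and S :: "real^'n^'n"
  assumes symS: "transpose S = S"
begin

abbreviation "B \<equiv> S ** S"

lemma symB: "transpose B = B"
  by (simp add: matrix_transpose_mul symS)

lemma sym_inner: fixes M :: "real^'k^'k" shows "transpose M = M \<Longrightarrow> (M *v x) \<bullet> y = x \<bullet> (M *v y)"
  using dot_lmul_matrix[of x M y] transpose_matrix_vector[of M x] by simp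

lemma S_inner: "(S *v x) \<bullet> y = x \<bullet> (S *v y)" using sym_inner[OF symS] .
lemma B_inner: "(B *v x) \<bullet> y = x \<bullet> (B *v y)" using sym_inner[OF symB] .

definition p :: "real^'n \<Rightarrow> real" where "p x = x \<bullet> (S *v x)"
definition q :: "real^'n \<Rightarrow> real" where "q x = x \<bullet> (B *v x)"

lemma p_add: "p (x + h) = p x + 2 * ((S *v x) \<bullet> h) + p h"
proof -
  have "x \<bullet> (S *v h) = (S *v x) \<bullet> h" by (rule S_inner[symmetric])
  then show ?thesis unfolding p_def by (simp add: matrix_vector_right_distrib inner_add_left inner_add_right inner_commute)
qed
lemma q_add: "q (x + h) = q x + 2 * ((B *v x) \<bullet> h) + q h"
proof -
  have "x \<bullet> (B *v h) = (B *v x) \<bullet> h" by (rule B_inner[symmetric])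
  then show ?thesis unfolding q_def by (simp add: matrix_vector_right_distrib inner_add_left inner_add_right inner_commute)
qed

lemma R_eq: "R_soft lam S x = trace S - 2 * lam * q x + lam\<^sup>2 * p x * q x"
  unfolding R_soft_def p_def q_def by simp

definition g :: "real^'n \<Rightarrow> real^'n" where
  "g x = (-4*lam) *\<^sub>R (B *v x) + (2*lam^2) *\<^sub>R (q x *\<^sub>R (S *v x) + p x *\<^sub>R (B *v x))"

definition L :: "real^'n \<Rightarrow> real^'n \<Rightarrow> real^'n" where
  "L x h = (-4*lam) *\<^sub>R (B *v h) + (2*lam^2) *\<^sub>R (q x *\<^sub>R (S *v h) + p x *\<^sub>R (B *v h))
     + (4*lam^2) *\<^sub>R (((B *v x) \<bullet> h) *\<^sub>R (S *v x) + ((S *v x) \<bullet> h) *\<^sub>R (B *v x))"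

definition M :: "real^'n \<Rightarrow> real^'n^'n" where
  "M x = (-4*lam) *\<^sub>R B + (2*lam^2) *\<^sub>R (q x *\<^sub>R S + p x *\<^sub>R B)
     + (4*lam^2) *\<^sub>R (outer (S *v x) (B *v x) + outer (B *v x) (S *v x))"

lemma M_mult: "M x *v h = L x h"
  unfolding M_def L_def
  by (simp add: matrix_vector_mult_add_rdistrib matrix_vector_mult_diff_rdistrib scaleR_matrix_vector_assoc[symmetric] outer_mult)

lemma L_bl: "bounded_linear (L x)"
proof -
  have "L x = (*v) (M x)" by (rule ext) (simp add: M_mult)
  then show ?thesis by simp
qed

definition Rf :: "real^'n \<Rightarrow> real^'n \<Rightarrow> real" where
  "Rf x h = -2*lam * q h + lam^2 * (p x * q h + q x * p h
      + (2 * ((S *v x) \<bullet> h) + p h) * (2 * ((B *v x) \<bullet> h) + q h))"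

lemma f_expand: "R_soft lam S (x + h) = R_soft lam S x + g x \<bullet> h + Rf x h"
  unfolding R_eq p_add q_add Rf_def g_def
  by (simp add: inner_add_left algebra_simps power2_eq_square)

definition Rg :: "real^'n \<Rightarrow> real^'n \<Rightarrow> real^'n" where
  "Rg x h = (2*lam^2) *\<^sub>R (q h *\<^sub>R (S *v x) + (2 * ((B *v x) \<bullet> h) + q h) *\<^sub>R (S *v h)
      + p h *\<^sub>R (B *v x) + (2 * ((S *v x) \<bullet> h) + p h) *\<^sub>R (B *v h))"

lemma g_expand: "g (x + h) = g x + L x h + Rg x h"
  unfolding g_def L_def Rg_def p_add q_add
  by (simp add: matrix_vector_right_distrib algebra_simps)


lemma mat_bound: fixes A :: "real^'m^'k" obtains n :: real where "n > 0" "\<And>v. norm (A *v v) \<le> n * norm v"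
proof -
  have "bounded_linear ((*v) A)" by simp
  from bounded_linear.pos_bounded[OF this] obtain K where "K > 0" "\<And>v. norm (A *v v) \<le> norm v * K" by blast
  then show ?thesis using that[of K] by (simp add: mult.commute)
qed

lemma quad_abs: fixes a b A B t :: real
  assumes "\<bar>a\<bar> \<le> A * t" "\<bar>b\<bar> \<le> B * t"
  shows "\<bar>a * b\<bar> \<le> (A * B) * t^2"
proof -
  have "\<bar>a * b\<bar> = \<bar>a\<bar> * \<bar>b\<bar>" by (simp add: abs_mult)
  also have "\<dots> \<le> (A * t) * (B * t)"
    by (rule mult_mono[OF assms]) (use assms in auto)
  finally show ?thesis by (simp add: power2_eq_square mult_ac)
qed

lemma inner_bound: "\<bar>(A *v x) \<bullet> h\<bar> \<le> (n * norm x) * norm h" if "\<And>v. norm (A *v v) \<le> n * norm v"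
proof -
  have "\<bar>(A *v x) \<bullet> h\<bar> \<le> norm (A *v x) * norm h" by (rule Cauchy_Schwarz_ineq2)
  also have "\<dots> \<le> (n * norm x) * norm h" by (intro mult_right_mono that) auto
  finally show ?thesis .
qed

lemma p_bound: "\<bar>p h\<bar> \<le> n * norm h ^ 2" if "\<And>v. norm (S *v v) \<le> n * norm v"
proof -
  have "\<bar>p h\<bar> = \<bar>(S *v h) \<bullet> h\<bar>" by (simp add: p_def inner_commute)
  also have "\<dots> \<le> (n * norm h) * norm h" by (rule inner_bound[OF that])
  finally show ?thesis by (simp add: power2_eq_square mult_ac)
qed

lemma q_bound: "\<bar>q h\<bar> \<le> n * norm h ^ 2" if "\<And>v. norm (B *v v) \<le> n * norm v"
proof -
  have "\<bar>q h\<bar> = \<bar>(B *v h) \<bullet> h\<bar>" by (simp add: q_def inner_commute)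
  also have "\<dots> \<le> (n * norm h) * norm h" by (rule inner_bound[OF that])
  finally show ?thesis by (simp add: power2_eq_square mult_ac)
qed

lemma lin_bound: fixes c P N t :: real
  assumes "\<bar>c\<bar> \<le> N * t" "\<bar>P\<bar> \<le> n * t^2" "0 \<le> t" "t \<le> 1" "0 \<le> n"
  shows "\<bar>2 * c + P\<bar> \<le> (2 * N + n) * t"
proof -
  have "n * t^2 \<le> n * t" using assms by (intro mult_left_mono) (auto simp: power2_eq_square intro: mult_left_le_one_le)
  moreover have "(2 * N + n) * t = 2 * (N * t) + n * t" by (simp add: algebra_simps)
  ultimately show ?thesis using assms(1,2) by linarith
qed

lemma Rf_bound: "\<exists>K>0. \<forall>h. norm h \<le> 1 \<longrightarrow> \<bar>Rf x h\<bar> \<le> K * norm h ^ 2"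
proof -
  obtain nS where nS: "nS > 0" "\<And>v. norm (S *v v) \<le> nS * norm v" using mat_bound[of S] by blast
  obtain nB where nB: "nB > 0" "\<And>v. norm (B *v v) \<le> nB * norm v" using mat_bound[of B] by blast
  define C where "C = \<bar>p x\<bar> * nB + \<bar>q x\<bar> * nS
      + (2 * (nS * norm x) + nS) * (2 * (nB * norm x) + nB)"
  define K where "K = 2 * \<bar>lam\<bar> * nB + lam^2 * C + 1"
  have C0: "C \<ge> 0" unfolding C_def using nS(1) nB(1)
    by (intro add_nonneg_nonneg mult_nonneg_nonneg) simp_all
  have Kpos: "K > 0" unfolding K_def using nB(1) C0 by (simp add: add_nonneg_pos)
  show ?thesis
  proof (intro exI[of _ K] conjI allI impI Kpos)
    fix h :: "real^'n" assume h: "norm h \<le> 1"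
    let ?t = "norm h"
    let ?a = "2 * ((S *v x) \<bullet> h) + p h" and ?b = "2 * ((B *v x) \<bullet> h) + q h"
    have ph: "\<bar>p h\<bar> \<le> nS * ?t^2" by (rule p_bound[OF nS(2)])
    have qh: "\<bar>q h\<bar> \<le> nB * ?t^2" by (rule q_bound[OF nB(2)])
    have a: "\<bar>?a\<bar> \<le> (2 * (nS * norm x) + nS) * ?t"
      by (rule lin_bound[OF inner_bound[OF nS(2)] ph norm_ge_zero h less_imp_le[OF nS(1)]])
    have b: "\<bar>?b\<bar> \<le> (2 * (nB * norm x) + nB) * ?t"
      by (rule lin_bound[OF inner_bound[OF nB(2)] qh norm_ge_zero h less_imp_le[OF nB(1)]])
    have ab: "\<bar>?a * ?b\<bar> \<le> ((2 * (nS * norm x) + nS) * (2 * (nB * norm x) + nB)) * ?t^2"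
      by (rule quad_abs[OF a b])
    have t1: "\<bar>-2*lam * q h\<bar> \<le> (2 * \<bar>lam\<bar> * nB) * ?t^2"
      using mult_left_mono[OF qh, of "2*\<bar>lam\<bar>"] by (simp add: abs_mult mult_ac)
    have t2: "\<bar>p x * q h\<bar> \<le> (\<bar>p x\<bar> * nB) * ?t^2"
      using mult_left_mono[OF qh, of "\<bar>p x\<bar>"] by (simp add: abs_mult mult_ac)
    have t3: "\<bar>q x * p h\<bar> \<le> (\<bar>q x\<bar> * nS) * ?t^2"
      using mult_left_mono[OF ph, of "\<bar>q x\<bar>"] by (simp add: abs_mult mult_ac)
    have Ce: "C * ?t^2 = (\<bar>p x\<bar> * nB) * ?t^2 + (\<bar>q x\<bar> * nS) * ?t^2
      + ((2 * (nS * norm x) + nS) * (2 * (nB * norm x) + nB)) * ?t^2"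
      unfolding C_def by (simp only: distrib_right)
    have in3: "\<bar>p x * q h + q x * p h + ?a * ?b\<bar> \<le> C * ?t^2"
      using t2 t3 ab Ce by linarith
    have t4: "\<bar>lam^2 * (p x * q h + q x * p h + ?a * ?b)\<bar> \<le> lam^2 * (C * ?t^2)"
      using mult_left_mono[OF in3, of "lam^2"] by (simp add: abs_mult)
    have Ke: "K * ?t^2 = (2 * \<bar>lam\<bar> * nB) * ?t^2 + lam^2 * (C * ?t^2) + ?t^2"
      unfolding K_def by (simp only: distrib_right mult.assoc)
    have "\<bar>Rf x h\<bar> \<le> \<bar>-2*lam * q h\<bar> + \<bar>lam^2 * (p x * q h + q x * p h + ?a * ?b)\<bar>"
      unfolding Rf_def by (rule abs_triangle_ineq)
    also have "\<dots> \<le> K * ?t^2" using t1 t4 Ke zero_le_power2[of "norm h"] by linarith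
    finally show "\<bar>Rf x h\<bar> \<le> K * ?t^2" .
  qed
qed


lemma sc_bound: "\<bar>c\<bar> \<le> a \<Longrightarrow> norm v \<le> b \<Longrightarrow> norm (c *\<^sub>R v) \<le> a * b"
  by (simp add: mult_mono')

lemma Rg_bound: "\<exists>K>0. \<forall>h. norm h \<le> 1 \<longrightarrow> norm (Rg x h) \<le> K * norm h ^ 2"
proof -
  obtain nS where nS: "nS > 0" "\<And>v. norm (S *v v) \<le> nS * norm v" using mat_bound[of S] by blast
  obtain nB where nB: "nB > 0" "\<And>v. norm (B *v v) \<le> nB * norm v" using mat_bound[of B] by blast
  define D where "D = nB*nS*norm x + (2 * (nB * norm x) + nB)*nS + nS*nB*norm x + (2 * (nS * norm x) + nS)*nB"
  define K where "K = 2 * lam^2 * D + 1"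
  have D0: "D \<ge> 0" unfolding D_def using nS(1) nB(1)
    by (intro add_nonneg_nonneg mult_nonneg_nonneg) simp_all
  have Kpos: "K > 0" unfolding K_def using D0 by (simp add: add_nonneg_pos)
  show ?thesis
  proof (intro exI[of _ K] conjI allI impI Kpos)
    fix h :: "real^'n" assume h: "norm h \<le> 1"
    let ?t = "norm h"
    let ?a = "2 * ((S *v x) \<bullet> h) + p h" and ?b = "2 * ((B *v x) \<bullet> h) + q h"
    have ph: "\<bar>p h\<bar> \<le> nS * ?t^2" by (rule p_bound[OF nS(2)])
    have qh: "\<bar>q h\<bar> \<le> nB * ?t^2" by (rule q_bound[OF nB(2)])
    have a: "\<bar>?a\<bar> \<le> (2 * (nS * norm x) + nS) * ?t"
      by (rule lin_bound[OF inner_bound[OF nS(2)] ph norm_ge_zero h less_imp_le[OF nS(1)]])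
    have b: "\<bar>?b\<bar> \<le> (2 * (nB * norm x) + nB) * ?t"
      by (rule lin_bound[OF inner_bound[OF nB(2)] qh norm_ge_zero h less_imp_le[OF nB(1)]])
    have n1: "norm (q h *\<^sub>R (S *v x)) \<le> (nB * ?t^2) * (nS * norm x)" by (rule sc_bound[OF qh nS(2)])
    have n2: "norm (?b *\<^sub>R (S *v h)) \<le> ((2 * (nB * norm x) + nB) * ?t) * (nS * ?t)" by (rule sc_bound[OF b nS(2)])
    have n3: "norm (p h *\<^sub>R (B *v x)) \<le> (nS * ?t^2) * (nB * norm x)" by (rule sc_bound[OF ph nB(2)])
    have n4: "norm (?a *\<^sub>R (B *v h)) \<le> ((2 * (nS * norm x) + nS) * ?t) * (nB * ?t)" by (rule sc_bound[OF a nB(2)])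
    have e: "(nB * ?t^2) * (nS * norm x) + ((2 * (nB * norm x) + nB) * ?t) * (nS * ?t)
       + (nS * ?t^2) * (nB * norm x) + ((2 * (nS * norm x) + nS) * ?t) * (nB * ?t) = D * ?t^2"
      unfolding D_def by (simp add: algebra_simps power2_eq_square)
    let ?v = "q h *\<^sub>R (S *v x) + ?b *\<^sub>R (S *v h) + p h *\<^sub>R (B *v x) + ?a *\<^sub>R (B *v h)"
    have tri: "norm ?v \<le> norm (q h *\<^sub>R (S *v x)) + norm (?b *\<^sub>R (S *v h)) + norm (p h *\<^sub>R (B *v x)) + norm (?a *\<^sub>R (B *v h))"
      by (intro norm_triangle_le add_mono order_refl)
    have nv: "norm ?v \<le> D * ?t^2" using tri n1 n2 n3 n4 e by linarith
    have "norm (Rg x h) = 2 * lam^2 * norm ?v" unfolding Rg_def by simp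
    also have "\<dots> \<le> 2 * lam^2 * (D * ?t^2)" by (rule mult_left_mono[OF nv]) simp
    also have "\<dots> \<le> K * ?t^2" unfolding K_def by (simp add: algebra_simps)
    finally show "norm (Rg x h) \<le> K * ?t^2" .
  qed
qed

lemma R_deriv: "(R_soft lam S has_derivative (\<lambda>h. g x \<bullet> h)) (at x)"
proof -
  obtain K where K: "\<And>h. norm h \<le> 1 \<Longrightarrow> \<bar>Rf x h\<bar> \<le> K * norm h ^ 2" using Rf_bound by blast
  show ?thesis
  proof (rule deriv_quad)
    show "bounded_linear ((\<bullet>) (g x))" by (rule bounded_linear_inner_right)
    fix h :: "real^'n" assume "norm h \<le> 1"
    then show "norm (R_soft lam S (x + h) - R_soft lam S x - g x \<bullet> h) \<le> K * norm h ^ 2"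
      using K by (simp add: f_expand)
  qed
qed

lemma grad_eq: "gradient (R_soft lam S) x = g x"
  by (rule gradient_eqI[OF R_deriv])

lemma g_deriv: "(g has_derivative L x) (at x)"
proof -
  obtain K where K: "\<And>h. norm h \<le> 1 \<Longrightarrow> norm (Rg x h) \<le> K * norm h ^ 2" using Rg_bound by blast
  show ?thesis
  proof (rule deriv_quad[OF L_bl])
    fix h :: "real^'n" assume "norm h \<le> 1"
    then show "norm (g (x + h) - g x - L x h) \<le> K * norm h ^ 2"
      using K by (simp add: g_expand)
  qed
qed

lemma gi_deriv: "((\<lambda>y. g y $ i) has_derivative (\<lambda>h. (M x $ i) \<bullet> h)) (at x)"
proof -
  have "((\<lambda>y. g y $ i) has_derivative (\<lambda>h. L x h $ i)) (at x)"
    using bounded_linear.has_derivative[OF bounded_linear_vec_nth g_deriv] .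
  moreover have "(\<lambda>h. L x h $ i) = (\<lambda>h. (M x $ i) \<bullet> h)"
    by (rule ext) (simp add: M_mult[symmetric] matrix_row_inner)
  ultimately show ?thesis by simp
qed

lemma hess_eq: "hessian (R_soft lam S) x = M x"
  unfolding hessian_def grad_eq
  by (simp add: gradient_eqI[OF gi_deriv] vec_eq_iff)


lemma vec_deriv_at:
  assumes "t > 0" "(m has_vector_derivative v) (at t within {0..})"
  shows "(m has_derivative (\<lambda>h. h *\<^sub>R v)) (at t)"
proof -
  have "t \<in> interior {0::real..}" using assms(1) by simp
  then have "at t within {0..} = at t" by (rule at_within_interior)
  then show ?thesis using assms(2) by (simp add: has_vector_derivative_def)
qed

lemma R_comp_deriv:
  assumes "(m has_derivative (\<lambda>h. h *\<^sub>R v)) (at t)"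
  shows "((\<lambda>t. R_soft lam S (m t)) has_field_derivative (g (m t) \<bullet> v)) (at t)"
proof -
  have "((R_soft lam S \<circ> m) has_derivative ((\<lambda>h. g (m t) \<bullet> h) \<circ> (\<lambda>h. h *\<^sub>R v))) (at t)"
    by (rule diff_chain_at[OF assms R_deriv])
  then have "((\<lambda>t. R_soft lam S (m t)) has_derivative (\<lambda>h. g (m t) \<bullet> (h *\<^sub>R v))) (at t)"
    by (simp add: o_def)
  then show ?thesis
    by (rule has_derivative_imp_has_field_derivative) (simp add: mult.commute)
qed

lemma exp_deriv: "((\<lambda>t. exp (c * (t - t0))) has_field_derivative c * exp (c * (t - t0))) (at t)"
  by (auto intro!: derivative_eq_intros)

lemma decay_f:
  assumes flow: "\<And>t. t \<ge> 0 \<Longrightarrow> (m has_vector_derivative (- g (m t))) (at t within {0..})"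
    and conv: "(m \<longlongrightarrow> xs) at_top"
    and loj: "lojasiewicz (R_soft lam S) (1/2) xs"
  shows "\<exists>t0\<ge>0. \<exists>s>0. \<forall>t\<ge>t0. R_soft lam S (m t) - R_soft lam S xs
            \<le> (R_soft lam S (m t0) - R_soft lam S xs) * exp (- s * (t - t0))"
proof -
  from loj obtain C U where C: "C > 0" and U: "open U" "xs \<in> U"
    and ineq: "\<And>x. x \<in> U \<Longrightarrow> norm (g x) \<ge> C * \<bar>R_soft lam S x - R_soft lam S xs\<bar> powr (1/2)"
    unfolding lojasiewicz_def grad_eq by blast
  have "eventually (\<lambda>t. m t \<in> U) at_top" by (rule topological_tendstoD[OF conv U])
  then obtain N where N: "\<And>t. t \<ge> N \<Longrightarrow> m t \<in> U" by (auto simp: eventually_at_top_linorder)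
  define t0 where "t0 = max N 1"
  define s where "s = C^2"
  let ?D = "\<lambda>t. R_soft lam S (m t) - R_soft lam S xs"
  define \<phi> where "\<phi> = (\<lambda>t. ?D t * exp (s * (t - t0)))"
  have key: "\<exists>y. DERIV \<phi> t :> y \<and> y \<le> 0" if t: "t \<ge> t0" for t
  proof -
    have tpos: "t > 0" using t unfolding t0_def by simp
    have md: "(m has_derivative (\<lambda>h. h *\<^sub>R (- g (m t)))) (at t)"
      by (rule vec_deriv_at[OF tpos flow]) (use tpos in simp)
    have d1: "(?D has_field_derivative (g (m t) \<bullet> (- g (m t)))) (at t)"
      using R_comp_deriv[OF md] by (auto intro!: derivative_eq_intros)
    have d: "DERIV \<phi> t :> (g (m t) \<bullet> (- g (m t))) * exp (s * (t - t0)) + (s * exp (s * (t - t0))) * ?D t"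
      unfolding \<phi>_def by (rule DERIV_mult[OF d1 exp_deriv])
    have mU: "m t \<in> U" using N t unfolding t0_def by simp
    have "C * \<bar>?D t\<bar> powr (1/2) \<le> norm (g (m t))" using ineq[OF mU] .
    then have "C * sqrt \<bar>?D t\<bar> \<le> norm (g (m t))" by (simp add: powr_half_sqrt)
    then have "(C * sqrt \<bar>?D t\<bar>)^2 \<le> (norm (g (m t)))^2"
      by (rule power_mono) (use C in simp)
    then have "s * \<bar>?D t\<bar> \<le> (norm (g (m t)))^2" unfolding s_def by (simp add: power_mult_distrib)
    then have "s * ?D t \<le> g (m t) \<bullet> g (m t)"
      using C unfolding s_def by (simp add: power2_norm_eq_inner) (smt (verit) abs_ge_self mult_left_mono zero_le_power2)
    then have "(g (m t) \<bullet> (- g (m t))) + s * ?D t \<le> 0" by simp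
    then have "((g (m t) \<bullet> (- g (m t))) + s * ?D t) * exp (s * (t - t0)) \<le> 0"
      by (simp add: mult_nonpos_nonneg)
    then show ?thesis using d by (intro exI[of _ "(g (m t) \<bullet> (- g (m t))) * exp (s * (t - t0)) + (s * exp (s * (t - t0))) * ?D t"]) (simp add: algebra_simps)
  qed
  have t0s: "t0 \<ge> 0" "s > 0" using C unfolding t0_def s_def by auto
  have "\<forall>t\<ge>t0. ?D t \<le> ?D t0 * exp (- s * (t - t0))"
  proof (intro allI impI)
    fix t assume t: "t \<ge> t0"
    have "\<phi> t \<le> \<phi> t0"
    proof (rule DERIV_nonpos_imp_decreasing_open[OF t])
      show "\<And>x. t0 < x \<Longrightarrow> x < t \<Longrightarrow> \<exists>y. DERIV \<phi> x :> y \<and> y \<le> 0" using key by simp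
      show "continuous_on {t0..t} \<phi>"
        by (rule DERIV_atLeastAtMost_imp_continuous_on) (use key in blast)
    qed
    then have A: "?D t * exp (s * (t - t0)) \<le> ?D t0" unfolding \<phi>_def by simp
    have B: "?D t * exp (s * (t - t0)) * exp (- s * (t - t0)) \<le> ?D t0 * exp (- s * (t - t0))"
      by (rule mult_right_mono[OF A]) simp
    have e1: "exp (s * (t - t0)) * exp (- s * (t - t0)) = 1" by (simp add: exp_add[symmetric])
    have "?D t * exp (s * (t - t0)) * exp (- s * (t - t0)) = ?D t" by (simp only: mult.assoc e1) simp
    with B have "?D t \<le> ?D t0 * exp (- s * (t - t0))" by linarith
    then show "?D t \<le> ?D t0 * exp (- s * (t - t0))" .
  qed
  then show ?thesis using t0s by blast
qed


lemma loj_from: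
  assumes g0: "g x0 = 0" and mpos: "mm > 0" and low: "\<And>h. norm (L x0 h) \<ge> mm * norm h"
  shows "lojasiewicz (R_soft lam S) (1/2) x0"
proof -
  obtain Kg where Kg: "Kg > 0" "\<And>h. norm h \<le> 1 \<Longrightarrow> norm (Rg x0 h) \<le> Kg * norm h ^ 2" using Rg_bound by blast
  obtain Kf where Kf: "Kf > 0" "\<And>h. norm h \<le> 1 \<Longrightarrow> \<bar>Rf x0 h\<bar> \<le> Kf * norm h ^ 2" using Rf_bound by blast
  define r where "r = min 1 (mm / (2 * Kg))"
  define C where "C = mm / (2 * sqrt Kf)"
  have rpos: "r > 0" unfolding r_def using mpos Kg by simp
  have Cpos: "C > 0" unfolding C_def using mpos Kf by simp
  have main: "norm (gradient (R_soft lam S) x) \<ge> C * \<bar>R_soft lam S x - R_soft lam S x0\<bar> powr (1/2)"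
    if x: "x \<in> ball x0 r" for x
  proof -
    define h where "h = x - x0"
    have xh: "x = x0 + h" unfolding h_def by simp
    have hr: "norm h < r" using x unfolding h_def by (simp add: dist_norm norm_minus_commute)
    have h1: "norm h \<le> 1" using hr unfolding r_def by simp
    have hm: "Kg * norm h \<le> mm / 2"
    proof -
      have "norm h \<le> mm / (2 * Kg)" using hr unfolding r_def by simp
      then show ?thesis using Kg(1) by (simp add: field_simps)
    qed
    have ge: "norm (g x) \<ge> (mm / 2) * norm h"
    proof -
      have "g x = L x0 h + Rg x0 h" unfolding xh g_expand g0 by simp
      then have "norm (g x) \<ge> norm (L x0 h) - norm (Rg x0 h)" by (simp add: norm_diff_ineq)
      moreover have "norm (Rg x0 h) \<le> (Kg * norm h) * norm h" using Kg(2)[OF h1] by (simp add: power2_eq_square mult_ac)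
      moreover have "(Kg * norm h) * norm h \<le> (mm/2) * norm h" by (rule mult_right_mono[OF hm]) simp
      ultimately show ?thesis using low[of h] by linarith
    qed
    have fd: "\<bar>R_soft lam S x - R_soft lam S x0\<bar> \<le> Kf * norm h ^ 2"
      using Kf(2)[OF h1] unfolding xh f_expand g0 by simp
    have "\<bar>R_soft lam S x - R_soft lam S x0\<bar> powr (1/2) = sqrt \<bar>R_soft lam S x - R_soft lam S x0\<bar>"
      by (simp add: powr_half_sqrt)
    also have "\<dots> \<le> sqrt (Kf * norm h ^ 2)" using fd by (rule real_sqrt_le_mono)
    also have "\<dots> = sqrt Kf * norm h" by (simp add: real_sqrt_mult)
    finally have "C * \<bar>R_soft lam S x - R_soft lam S x0\<bar> powr (1/2) \<le> C * (sqrt Kf * norm h)"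
      using Cpos by (simp add: mult_left_mono)
    also have "C * (sqrt Kf * norm h) = (mm / 2) * norm h" unfolding C_def using Kf(1) by simp
    finally show ?thesis using ge unfolding grad_eq by linarith
  qed
  show ?thesis unfolding lojasiewicz_def
    using Cpos rpos main by (intro exI[of _ C] conjI exI[of _ "ball x0 r"]) auto
qed

lemma decay_x:
  assumes flow: "\<And>t. t \<ge> 0 \<Longrightarrow> (m has_vector_derivative (- g (m t))) (at t within {0..})"
    and conv: "(m \<longlongrightarrow> xs) at_top"
    and g0: "g xs = 0"
    and quad: "\<And>e. e \<bullet> L xs e \<ge> st * norm e ^ 2"
    and eps: "\<epsilon> > 0"
  shows "\<exists>t0>0. (\<lambda>t. norm (m t - xs)) \<in> O[at_top](\<lambda>t. exp (- (st - \<epsilon>) * (t - t0)))"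
proof -
  obtain K where K: "K > 0" "\<And>h. norm h \<le> 1 \<Longrightarrow> norm (Rg xs h) \<le> K * norm h ^ 2" using Rg_bound by blast
  define \<delta> where "\<delta> = min 1 (\<epsilon> / K)"
  have dpos: "\<delta> > 0" unfolding \<delta>_def using eps K by simp
  have "eventually (\<lambda>t. dist (m t) xs < \<delta>) at_top" using conv dpos by (rule tendstoD)
  then obtain N where N: "\<And>t. t \<ge> N \<Longrightarrow> dist (m t) xs < \<delta>" by (auto simp: eventually_at_top_linorder)
  define t0 where "t0 = max N 1"
  define c where "c = 2 * (st - \<epsilon>)"
  let ?e = "\<lambda>t. m t - xs"
  define \<psi> where "\<psi> = (\<lambda>t. (?e t \<bullet> ?e t) * exp (c * (t - t0)))"
  have key: "\<exists>y. DERIV \<psi> t :> y \<and> y \<le> 0" if t: "t \<ge> t0" for t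
  proof -
    have tpos: "t > 0" using t unfolding t0_def by simp
    let ?v = "- g (m t)"
    have md: "(m has_derivative (\<lambda>h. h *\<^sub>R ?v)) (at t)"
      by (rule vec_deriv_at[OF tpos flow]) (use tpos in simp)
    have ed: "(?e has_derivative (\<lambda>h. h *\<^sub>R ?v)) (at t)"
      using has_derivative_diff[OF md has_derivative_const[of xs]] by simp
    have "((\<lambda>t. ?e t \<bullet> ?e t) has_derivative (\<lambda>h. ?e t \<bullet> (h *\<^sub>R ?v) + (h *\<^sub>R ?v) \<bullet> ?e t)) (at t)"
      by (rule has_derivative_inner[OF ed ed])
    then have d1: "((\<lambda>t. ?e t \<bullet> ?e t) has_field_derivative (2 * (?e t \<bullet> ?v))) (at t)"
      by (rule has_derivative_imp_has_field_derivative) (simp add: inner_commute algebra_simps)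
    have d: "DERIV \<psi> t :> (2 * (?e t \<bullet> ?v)) * exp (c * (t - t0)) + (c * exp (c * (t - t0))) * (?e t \<bullet> ?e t)"
      unfolding \<psi>_def by (rule DERIV_mult[OF d1 exp_deriv])
    have en: "norm (?e t) < \<delta>" using N[of t] t unfolding t0_def by (simp add: dist_norm)
    have e1: "norm (?e t) \<le> 1" using en unfolding \<delta>_def by simp
    have eK: "K * norm (?e t) \<le> \<epsilon>"
    proof -
      have "norm (?e t) \<le> \<epsilon> / K" using en unfolding \<delta>_def by simp
      then show ?thesis using K(1) by (simp add: field_simps)
    qed
    have gm: "g (m t) = L xs (?e t) + Rg xs (?e t)"
      using g_expand[of xs "?e t"] g0 by simp
    have "\<bar>?e t \<bullet> Rg xs (?e t)\<bar> \<le> norm (?e t) * norm (Rg xs (?e t))" by (rule Cauchy_Schwarz_ineq2)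
    also have "\<dots> \<le> norm (?e t) * (K * norm (?e t) ^ 2)" by (rule mult_left_mono[OF K(2)[OF e1]]) simp
    also have "\<dots> = (K * norm (?e t)) * norm (?e t) ^ 2" by (simp add: algebra_simps)
    also have "\<dots> \<le> \<epsilon> * norm (?e t) ^ 2" by (rule mult_right_mono[OF eK]) simp
    finally have rb: "\<bar>?e t \<bullet> Rg xs (?e t)\<bar> \<le> \<epsilon> * norm (?e t) ^ 2" .
    have "?e t \<bullet> ?v = - (?e t \<bullet> L xs (?e t)) - ?e t \<bullet> Rg xs (?e t)"
      unfolding gm by (simp add: inner_add_right inner_diff_right)
    then have "?e t \<bullet> ?v \<le> - (st - \<epsilon>) * norm (?e t) ^ 2"
      using quad[of "?e t"] rb by (simp add: algebra_simps)
    moreover have "?e t \<bullet> ?e t = norm (?e t) ^ 2" by (simp add: power2_norm_eq_inner)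
    ultimately have "2 * (?e t \<bullet> ?v) + c * (?e t \<bullet> ?e t) \<le> 0" unfolding c_def by (simp add: algebra_simps)
    then have "(2 * (?e t \<bullet> ?v) + c * (?e t \<bullet> ?e t)) * exp (c * (t - t0)) \<le> 0"
      by (simp add: mult_nonpos_nonneg)
    then show ?thesis using d
      by (intro exI[of _ "(2 * (?e t \<bullet> ?v)) * exp (c * (t - t0)) + (c * exp (c * (t - t0))) * (?e t \<bullet> ?e t)"])
         (simp add: algebra_simps)
  qed
  have bound: "norm (?e t) \<le> norm (?e t0) * exp (- (st - \<epsilon>) * (t - t0))" if t: "t \<ge> t0" for t
  proof -
    have "\<psi> t \<le> \<psi> t0"
    proof (rule DERIV_nonpos_imp_decreasing_open[OF t])
      show "\<And>x. t0 < x \<Longrightarrow> x < t \<Longrightarrow> \<exists>y. DERIV \<psi> x :> y \<and> y \<le> 0" using key by simp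
      show "continuous_on {t0..t} \<psi>"
        by (rule DERIV_atLeastAtMost_imp_continuous_on) (use key in blast)
    qed
    then have A: "norm (?e t) ^ 2 * exp (c * (t - t0)) \<le> norm (?e t0) ^ 2"
      unfolding \<psi>_def by (simp add: power2_norm_eq_inner)
    have B: "norm (?e t) ^ 2 * exp (c * (t - t0)) * exp (- c * (t - t0)) \<le> norm (?e t0) ^ 2 * exp (- c * (t - t0))"
      by (rule mult_right_mono[OF A]) simp
    have e1: "exp (c * (t - t0)) * exp (- c * (t - t0)) = 1" by (simp add: exp_add[symmetric])
    have "norm (?e t) ^ 2 * exp (c * (t - t0)) * exp (- c * (t - t0)) = norm (?e t) ^ 2" by (simp only: mult.assoc e1 mult_1_right)
    with B have C: "norm (?e t) ^ 2 \<le> norm (?e t0) ^ 2 * exp (- c * (t - t0))" by linarith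
    have "exp (- c * (t - t0)) = (exp (- (st - \<epsilon>) * (t - t0)))^2"
      unfolding c_def by (simp add: exp_double[symmetric] algebra_simps)
    then have "norm (?e t) ^ 2 \<le> (norm (?e t0) * exp (- (st - \<epsilon>) * (t - t0)))^2"
      using C by (simp add: power_mult_distrib)
    then show ?thesis by (rule power2_le_imp_le) simp
  qed
  have "(\<lambda>t. norm (m t - xs)) \<in> O[at_top](\<lambda>t. exp (- (st - \<epsilon>) * (t - t0)))"
  proof (rule bigoI)
    show "eventually (\<lambda>t. norm (norm (m t - xs)) \<le> norm (?e t0) * norm (exp (- (st - \<epsilon>) * (t - t0)))) at_top"
      using bound by (auto simp: eventually_at_top_linorder intro!: exI[of _ t0])
  qed
  moreover have "t0 > 0" unfolding t0_def by simp
  ultimately show ?thesis by blast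
qed

end

lemma mv_sum: "N *v sum f A = (\<Sum>j\<in>A. N *v f j)"
  by (induct A rule: infinite_finite_induct) (simp_all add: matrix_vector_right_distrib)

locale rs2 = rs lam S for lam :: real and S :: "real^'n^'n" +
  fixes \<sigma> :: "nat \<Rightarrow> real" and u :: "nat \<Rightarrow> real^'n" and d :: nat
  assumes d_def: "d = CARD('n)" and d2: "d \<ge> 2" and lam: "lam > 0"
    and spec_dec: "\<And>i j. 1 \<le> i \<Longrightarrow> i < j \<Longrightarrow> j \<le> d \<Longrightarrow> \<sigma> i > \<sigma> j"
    and spec_pos: "\<sigma> d > 0"
    and eigvec: "\<And>i. 1 \<le> i \<Longrightarrow> i \<le> d \<Longrightarrow> S *v u i = \<sigma> i *\<^sub>R u i \<and> norm (u i) = 1"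
begin

abbreviation "I \<equiv> {1..d}"

lemma sig_pos: assumes j: "j \<in> I" shows "\<sigma> j > 0"
proof (cases "j < d")
  case True
  have "\<sigma> j > \<sigma> d" by (rule spec_dec) (use j True in auto)
  then show ?thesis using spec_pos by linarith
next
  case False
  then have "j = d" using j by simp
  then show ?thesis using spec_pos by simp
qed

lemma sig_inj: assumes i: "i \<in> I" and j: "j \<in> I" and e: "\<sigma> i = \<sigma> j" shows "i = j"
proof (rule ccontr)
  assume ne: "i \<noteq> j"
  show False
  proof (cases "i < j")
    case True
    have "\<sigma> i > \<sigma> j" by (rule spec_dec) (use i j True in auto)
    then show False using e by simp
  next
    case False
    then have "j < i" using ne by simp
    have "\<sigma> j > \<sigma> i" by (rule spec_dec) (use i j \<open>j < i\<close> in auto)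
    then show False using e by simp
  qed
qed

lemma Su: "j \<in> I \<Longrightarrow> S *v u j = \<sigma> j *\<^sub>R u j" using eigvec by auto
lemma Bu: "j \<in> I \<Longrightarrow> B *v u j = (\<sigma> j)^2 *\<^sub>R u j"
  by (simp add: matrix_vector_mul_assoc[symmetric] Su matrix_vector_mult_scaleR power2_eq_square)
lemma uu: "j \<in> I \<Longrightarrow> u j \<bullet> u j = 1"
  using eigvec[of j] by (simp add: power2_norm_eq_inner[symmetric])

lemma orth: assumes "i \<in> I" "j \<in> I" "i \<noteq> j" shows "u i \<bullet> u j = 0"
proof -
  have "\<sigma> i * (u i \<bullet> u j) = (S *v u i) \<bullet> u j" using Su[OF assms(1)] by simp
  also have "\<dots> = u i \<bullet> (S *v u j)" by (rule S_inner)
  also have "\<dots> = \<sigma> j * (u i \<bullet> u j)" using Su[OF assms(2)] by simp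
  finally have "(\<sigma> i - \<sigma> j) * (u i \<bullet> u j) = 0" by (simp add: algebra_simps)
  moreover have "\<sigma> i \<noteq> \<sigma> j" using sig_inj assms by blast
  ultimately show ?thesis by simp
qed

lemma uij: "i \<in> I \<Longrightarrow> j \<in> I \<Longrightarrow> u i \<bullet> u j = (if i = j then 1 else 0)"
  using orth uu by auto

lemma coef: "k \<in> I \<Longrightarrow> (\<Sum>j\<in>I. a j *\<^sub>R u j) \<bullet> u k = a k"
proof -
  assume k: "k \<in> I"
  have "(\<Sum>j\<in>I. a j *\<^sub>R u j) \<bullet> u k = (\<Sum>j\<in>I. a j * (u j \<bullet> u k))" by (simp add: inner_sum_left)
  also have "\<dots> = (\<Sum>j\<in>I. if j = k then a j else 0)"
    by (rule sum.cong) (use k in \<open>auto simp: uij\<close>)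
  also have "\<dots> = a k" using k by simp
  finally show ?thesis .
qed

lemma expand: "x = (\<Sum>j\<in>I. (x \<bullet> u j) *\<^sub>R u j)"
proof (rule ccontr)
  assume ne: "x \<noteq> (\<Sum>j\<in>I. (x \<bullet> u j) *\<^sub>R u j)"
  define y where "y = x - (\<Sum>j\<in>I. (x \<bullet> u j) *\<^sub>R u j)"
  have y0: "y \<noteq> 0" using ne unfolding y_def by simp
  have yu: "y \<bullet> u k = 0" if "k \<in> I" for k
    unfolding y_def using coef[OF that, of "\<lambda>j. x \<bullet> u j"] by (simp add: inner_diff_left)
  have u0: "u j \<noteq> 0" if "j \<in> I" for j using uu[OF that] by auto
  have inj: "inj_on u I"
  proof (rule inj_onI)
    fix i j assume "i \<in> I" "j \<in> I" "u i = u j"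
    then show "i = j" using uij[of i j] uu[of j] by (auto split: if_splits)
  qed
  have ynot: "y \<notin> u ` I"
  proof
    assume "y \<in> u ` I"
    then obtain k where "k \<in> I" "y = u k" by auto
    then show False using yu[of k] uu[of k] by simp
  qed
  define T where "T = insert y (u ` I)"
  have "pairwise orthogonal T"
    unfolding T_def pairwise_def orthogonal_def
  proof (intro ballI impI)
    fix a b assume ab: "a \<in> insert y (u ` I)" "b \<in> insert y (u ` I)" "a \<noteq> b"
    show "a \<bullet> b = 0"
    proof (cases "a = y")
      case True
      then obtain k where "k \<in> I" "b = u k" using ab by auto
      then show ?thesis using True yu by simp
    next
      case False
      then obtain i where i: "i \<in> I" "a = u i" using ab by auto
      show ?thesis
      proof (cases "b = y")
        case True then show ?thesis using i yu by (simp add: inner_commute)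
      next
        case False
        then obtain j where "j \<in> I" "b = u j" using ab by auto
        then show ?thesis using i ab(3) orth by blast
      qed
    qed
  qed
  moreover have "0 \<notin> T" unfolding T_def using y0 u0 by auto
  ultimately have "independent T" by (rule pairwise_orthogonal_independent)
  then have "card T \<le> DIM(real^'n)" using independent_bound by blast
  moreover have "card T = d + 1" unfolding T_def using ynot inj by (simp add: card_image)
  ultimately show False using d_def by simp
qed

lemma parseval: "x \<bullet> y = (\<Sum>j\<in>I. (x \<bullet> u j) * (y \<bullet> u j))"
proof -
  have "x \<bullet> y = (\<Sum>j\<in>I. (x \<bullet> u j) *\<^sub>R u j) \<bullet> y" using expand[of x] by simp
  also have "\<dots> = (\<Sum>j\<in>I. (x \<bullet> u j) * (u j \<bullet> y))" by (simp add: inner_sum_left)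
  also have "\<dots> = (\<Sum>j\<in>I. (x \<bullet> u j) * (y \<bullet> u j))" by (simp add: inner_commute)
  finally show ?thesis .
qed

lemma nexists: assumes "x \<noteq> 0" shows "\<exists>k\<in>I. x \<bullet> u k \<noteq> 0"
proof (rule ccontr)
  assume "\<not> ?thesis"
  then have "\<forall>k\<in>I. x \<bullet> u k = 0" by auto
  then have "(\<Sum>j\<in>I. (x \<bullet> u j) *\<^sub>R u j) = 0" by simp
  then show False using expand[of x] assms by simp
qed

context
  fixes N :: "real^'n^'n" and lv :: "nat \<Rightarrow> real"
  assumes eig: "\<And>j. j \<in> I \<Longrightarrow> N *v u j = lv j *\<^sub>R u j"
begin

lemma N_exp: "N *v x = (\<Sum>j\<in>I. (lv j * (x \<bullet> u j)) *\<^sub>R u j)"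
proof -
  have "N *v x = N *v (\<Sum>j\<in>I. (x \<bullet> u j) *\<^sub>R u j)" using expand[of x] by simp
  also have "\<dots> = (\<Sum>j\<in>I. (lv j * (x \<bullet> u j)) *\<^sub>R u j)"
    unfolding mv_sum by (rule sum.cong) (simp_all add: matrix_vector_mult_scaleR eig)
  finally show ?thesis .
qed

lemma N_coef: "k \<in> I \<Longrightarrow> (N *v x) \<bullet> u k = lv k * (x \<bullet> u k)"
  unfolding N_exp by (rule coef)

lemma N_norm: "norm (N *v x) ^ 2 = (\<Sum>j\<in>I. (lv j * (x \<bullet> u j))^2)"
  unfolding power2_norm_eq_inner parseval[of "N *v x" "N *v x"]
  by (rule sum.cong) (simp_all add: N_coef power2_eq_square)

lemma N_quad: "x \<bullet> (N *v x) = (\<Sum>j\<in>I. lv j * (x \<bullet> u j)^2)"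
  unfolding parseval[of x "N *v x"]
  by (rule sum.cong) (simp_all add: N_coef power2_eq_square)

lemma x_norm: "norm x ^ 2 = (\<Sum>j\<in>I. (x \<bullet> u j)^2)"
  unfolding power2_norm_eq_inner parseval[of x x] by (simp add: power2_eq_square)

lemma eigset: "{c. \<exists>v. v \<noteq> 0 \<and> N *v v = c *\<^sub>R v} = lv ` I"
proof (intro equalityI subsetI)
  fix c assume "c \<in> {c. \<exists>v. v \<noteq> 0 \<and> N *v v = c *\<^sub>R v}"
  then obtain v where v: "v \<noteq> 0" "N *v v = c *\<^sub>R v" by auto
  obtain k where k: "k \<in> I" "v \<bullet> u k \<noteq> 0" using nexists[OF v(1)] by blast
  have e: "(N *v v) \<bullet> u k = c * (v \<bullet> u k)" using v(2) by simp
  have "lv k * (v \<bullet> u k) = c * (v \<bullet> u k)" using N_coef[OF k(1), of v] e by linarith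
  then have "lv k = c" using k(2) by simp
  then show "c \<in> lv ` I" using k(1) by force
next
  fix c assume "c \<in> lv ` I"
  then obtain j where j: "j \<in> I" "c = lv j" by auto
  have "u j \<noteq> 0" using uu[OF j(1)] by auto
  then show "c \<in> {c. \<exists>v. v \<noteq> 0 \<and> N *v v = c *\<^sub>R v}" using eig[OF j(1)] j(2) by auto
qed

lemma N_low:
  assumes nz: "\<And>j. j \<in> I \<Longrightarrow> lv j \<noteq> 0"
  shows "\<exists>mm>0. \<forall>h. norm (N *v h) \<ge> mm * norm h"
proof -
  define mm where "mm = Min ((\<lambda>j. \<bar>lv j\<bar>) ` I)"
  have I_ne: "I \<noteq> {}" using d2 by auto
  have mm_in: "mm \<in> (\<lambda>j. \<bar>lv j\<bar>) ` I" unfolding mm_def using I_ne by (intro Min_in) auto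
  have mpos: "mm > 0" using mm_in nz by auto
  have mle: "mm \<le> \<bar>lv j\<bar>" if "j \<in> I" for j unfolding mm_def using that by (intro Min_le) auto
  have "(mm * norm h)^2 \<le> norm (N *v h)^2" for h
  proof -
    have "(mm * norm h)^2 = (\<Sum>j\<in>I. mm^2 * (h \<bullet> u j)^2)"
      by (simp add: power_mult_distrib x_norm sum_distrib_left)
    also have "\<dots> \<le> (\<Sum>j\<in>I. (lv j * (h \<bullet> u j))^2)"
    proof (rule sum_mono)
      fix j assume j: "j \<in> I"
      have "mm^2 \<le> (lv j)^2" using mle[OF j] mpos
        by (metis abs_ge_zero less_imp_le power2_abs power_mono)
      then show "mm^2 * (h \<bullet> u j)^2 \<le> (lv j * (h \<bullet> u j))^2"
        by (simp add: power_mult_distrib mult_right_mono)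
    qed
    also have "\<dots> = norm (N *v h)^2" by (simp add: N_norm)
    finally show ?thesis .
  qed
  then have "mm * norm h \<le> norm (N *v h)" for h
    by (rule power2_le_imp_le) simp
  then show ?thesis using mpos by blast
qed

lemma N_quad_low:
  assumes ge: "\<And>j. j \<in> I \<Longrightarrow> lv j \<ge> st"
  shows "x \<bullet> (N *v x) \<ge> st * norm x ^ 2"
proof -
  have "st * norm x ^ 2 = (\<Sum>j\<in>I. st * (x \<bullet> u j)^2)" by (simp add: x_norm sum_distrib_left)
  also have "\<dots> \<le> (\<Sum>j\<in>I. lv j * (x \<bullet> u j)^2)"
    by (rule sum_mono) (simp add: ge mult_right_mono)
  finally show ?thesis by (simp add: N_quad)
qed

end


lemma vec_eq_coords: assumes "\<And>k. k \<in> I \<Longrightarrow> v \<bullet> u k = w \<bullet> u k" shows "v = w"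
proof -
  have "v = (\<Sum>j\<in>I. (v \<bullet> u j) *\<^sub>R u j)" by (rule expand)
  also have "\<dots> = (\<Sum>j\<in>I. (w \<bullet> u j) *\<^sub>R u j)" by (rule sum.cong) (simp_all add: assms)
  also have "\<dots> = w" by (rule expand[symmetric])
  finally show ?thesis .
qed

lemma S_tu: "i \<in> I \<Longrightarrow> S *v (t *\<^sub>R u i) = (t * \<sigma> i) *\<^sub>R u i"
  by (simp add: matrix_vector_mult_scaleR Su)
lemma B_tu: "i \<in> I \<Longrightarrow> B *v (t *\<^sub>R u i) = (t * \<sigma> i ^ 2) *\<^sub>R u i"
  by (simp add: matrix_vector_mult_scaleR Bu)
lemma p_tu: "i \<in> I \<Longrightarrow> p (t *\<^sub>R u i) = t^2 * \<sigma> i"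
  by (simp add: p_def S_tu uu power2_eq_square)
lemma q_tu: "i \<in> I \<Longrightarrow> q (t *\<^sub>R u i) = t^2 * \<sigma> i ^ 2"
  by (simp add: q_def B_tu uu power2_eq_square)

lemma L_tu:
  assumes i: "i \<in> I" and c: "lam * t^2 * \<sigma> i = 1"
  shows "L (t *\<^sub>R u i) h = (-2*lam) *\<^sub>R (B *v h) + (2*lam*\<sigma> i) *\<^sub>R (S *v h) + (8*lam*\<sigma> i^2 * (u i \<bullet> h)) *\<^sub>R u i"
proof -
  have e1: "-4*lam + 2*lam^2 * (t^2 * \<sigma> i) = -2*lam"
  proof -
    have "2*lam^2 * (t^2 * \<sigma> i) = 2*lam*(lam * t^2 * \<sigma> i)" by (simp add: power2_eq_square)
    then show ?thesis using c by simp
  qed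
  have e2: "2*lam^2 * (t^2 * \<sigma> i^2) = 2*lam*\<sigma> i"
  proof -
    have "2*lam^2 * (t^2 * \<sigma> i^2) = 2*lam*\<sigma> i*(lam * t^2 * \<sigma> i)" by (simp add: power2_eq_square)
    then show ?thesis using c by simp
  qed
  have e3: "4*lam^2 * ((t * \<sigma> i^2) * (t * \<sigma> i)) + 4*lam^2 * ((t * \<sigma> i) * (t * \<sigma> i^2)) = 8*lam*\<sigma> i^2"
  proof -
    have "4*lam^2 * ((t * \<sigma> i^2) * (t * \<sigma> i)) + 4*lam^2 * ((t * \<sigma> i) * (t * \<sigma> i^2))
        = 8*lam*\<sigma> i^2*(lam * t^2 * \<sigma> i)" by (simp add: power2_eq_square)
    then show ?thesis using c by simp
  qed
  have "L (t *\<^sub>R u i) h = (-4*lam) *\<^sub>R (B *v h) + (2*lam^2 * (t^2 * \<sigma> i^2)) *\<^sub>R (S *v h)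
      + (2*lam^2 * (t^2 * \<sigma> i)) *\<^sub>R (B *v h)
      + ((4*lam^2 * ((t * \<sigma> i^2) * (t * \<sigma> i))) * (u i \<bullet> h)) *\<^sub>R u i
      + ((4*lam^2 * ((t * \<sigma> i) * (t * \<sigma> i^2))) * (u i \<bullet> h)) *\<^sub>R u i"
    unfolding L_def using i
    by (simp add: S_tu B_tu p_tu q_tu scaleR_add_right mult_ac)
  also have "\<dots> = (-4*lam + 2*lam^2 * (t^2 * \<sigma> i)) *\<^sub>R (B *v h) + (2*lam^2 * (t^2 * \<sigma> i^2)) *\<^sub>R (S *v h)
      + ((4*lam^2 * ((t * \<sigma> i^2) * (t * \<sigma> i)) + 4*lam^2 * ((t * \<sigma> i) * (t * \<sigma> i^2))) * (u i \<bullet> h)) *\<^sub>R u i"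
    by (simp only: scaleR_add_left distrib_right add_ac)
  also have "\<dots> = (-2*lam) *\<^sub>R (B *v h) + (2*lam*\<sigma> i) *\<^sub>R (S *v h) + (8*lam*\<sigma> i^2 * (u i \<bullet> h)) *\<^sub>R u i"
    by (simp only: e1 e2 e3)
  finally show ?thesis .
qed

lemma M_tu:
  assumes i: "i \<in> I" and c: "lam * t^2 * \<sigma> i = 1" and j: "j \<in> I"
  shows "M (t *\<^sub>R u i) *v u j = (if j = i then 8*lam*\<sigma> i^2 else 2*lam*\<sigma> j*(\<sigma> i - \<sigma> j)) *\<^sub>R u j"
proof (rule vec_eq_coords)
  fix k assume k: "k \<in> I"
  show "(M (t *\<^sub>R u i) *v u j) \<bullet> u k
      = ((if j = i then 8*lam*\<sigma> i^2 else 2*lam*\<sigma> j*(\<sigma> i - \<sigma> j)) *\<^sub>R u j) \<bullet> u k"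
    unfolding M_mult L_tu[OF i c]
    using i j k by (simp add: inner_add_left Su Bu uij algebra_simps power2_eq_square)
qed

lemma M_0: "j \<in> I \<Longrightarrow> M 0 *v u j = (-4*lam*\<sigma> j^2) *\<^sub>R u j"
  by (simp add: M_mult L_def Bu p_def q_def)


lemma S_coef: "k \<in> I \<Longrightarrow> (S *v w) \<bullet> u k = \<sigma> k * (w \<bullet> u k)"
  by (rule N_coef) (auto simp: Su)

lemma S_inj: assumes "S *v w = 0" shows "w = 0"
proof (rule ccontr)
  assume "w \<noteq> 0"
  then obtain k where k: "k \<in> I" "w \<bullet> u k \<noteq> 0" using nexists by blast
  have "\<sigma> k * (w \<bullet> u k) = 0" using S_coef[OF k(1), of w] assms by simp
  then show False using k sig_pos[OF k(1)] by simp
qed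

lemma g_fac: "g x = S *v ((2*lam^2*q x) *\<^sub>R x + (2*lam^2*p x - 4*lam) *\<^sub>R (S *v x))"
  unfolding g_def
  by (simp add: matrix_vector_right_distrib matrix_vector_mult_scaleR matrix_vector_mul_assoc algebra_simps)

lemma crit:
  assumes g0: "g x = 0"
  shows "x = 0 \<or> (\<exists>i\<in>I. \<exists>t. x = t *\<^sub>R u i \<and> lam * t^2 * \<sigma> i = 1)"
proof (cases "x = 0")
  case True then show ?thesis by simp
next
  case False
  define al where "al = 2*lam^2*q x"
  define be where "be = 2*lam^2*p x - 4*lam"
  have w0: "al *\<^sub>R x + be *\<^sub>R (S *v x) = 0"
    using g0 unfolding g_fac al_def be_def by (rule S_inj)
  have cw: "al * (x \<bullet> u k) + be * (\<sigma> k * (x \<bullet> u k)) = 0" if k: "k \<in> I" for k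
  proof -
    have "(al *\<^sub>R x + be *\<^sub>R (S *v x)) \<bullet> u k = 0" using w0 by simp
    then show ?thesis by (simp add: inner_add_left S_coef[OF k])
  qed
  obtain i where i: "i \<in> I" "x \<bullet> u i \<noteq> 0" using nexists[OF False] by blast
  have Ei: "al + be * \<sigma> i = 0"
  proof -
    have "(al + be * \<sigma> i) * (x \<bullet> u i) = 0" using cw[OF i(1)] by (simp add: algebra_simps)
    then show ?thesis using i(2) by simp
  qed
  have Sx: "S *v x \<noteq> 0" using False S_inj by blast
  have qpos: "q x > 0"
  proof -
    have "q x = (S *v x) \<bullet> (S *v x)" unfolding q_def matrix_vector_mul_assoc[symmetric] by (simp add: S_inner)
    then show ?thesis using Sx by simp
  qed
  have be0: "be \<noteq> 0"
  proof
    assume "be = 0"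
    then have "al = 0" using Ei by simp
    then show False using qpos lam unfolding al_def by simp
  qed
  have ck: "x \<bullet> u k = 0" if k: "k \<in> I" "k \<noteq> i" for k
  proof (rule ccontr)
    assume nz: "x \<bullet> u k \<noteq> 0"
    have "(al + be * \<sigma> k) * (x \<bullet> u k) = 0" using cw[OF k(1)] by (simp add: algebra_simps)
    then have "al + be * \<sigma> k = 0" using nz by simp
    then have "be * \<sigma> i = be * \<sigma> k" using Ei by linarith
    then have "\<sigma> i = \<sigma> k" using be0 by simp
    then show False using sig_inj[OF i(1) k(1)] k(2) by simp
  qed
  define t where "t = x \<bullet> u i"
  have xt: "x = t *\<^sub>R u i"
  proof -
    have "x = (\<Sum>j\<in>I. (x \<bullet> u j) *\<^sub>R u j)" by (rule expand)
    also have "\<dots> = (\<Sum>j\<in>I. if j = i then t *\<^sub>R u i else 0)"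
      by (rule sum.cong) (auto simp: ck t_def)
    also have "\<dots> = t *\<^sub>R u i" using i(1) by simp
    finally show ?thesis .
  qed
  have "2*lam^2*(t^2*\<sigma> i^2) + (2*lam^2*(t^2*\<sigma> i) - 4*lam) * \<sigma> i = 0"
    using Ei unfolding al_def be_def xt p_tu[OF i(1)] q_tu[OF i(1)] .
  then have "(4*lam*\<sigma> i) * (lam * t^2 * \<sigma> i) = (4*lam*\<sigma> i) * 1"
    by (simp add: algebra_simps power2_eq_square)
  then have "lam * t^2 * \<sigma> i = 1" using lam sig_pos[OF i(1)] by simp
  then show ?thesis using xt i(1) by blast
qed

lemma g_tu:
  assumes i: "i \<in> I" and c: "lam * t^2 * \<sigma> i = 1"
  shows "g (t *\<^sub>R u i) = 0"
proof -
  have z: "-4*lam*(t*\<sigma> i^2) + 2*lam^2*(t^2*\<sigma> i^2*(t*\<sigma> i) + t^2*\<sigma> i*(t*\<sigma> i^2)) = 0"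
  proof -
    have "-4*lam*(t*\<sigma> i^2) + 2*lam^2*(t^2*\<sigma> i^2*(t*\<sigma> i) + t^2*\<sigma> i*(t*\<sigma> i^2))
        = 4*lam*t*\<sigma> i^2*(lam * t^2 * \<sigma> i - 1)"
      by (simp add: algebra_simps power2_eq_square)
    then show ?thesis using c by simp
  qed
  have "g (t *\<^sub>R u i) = (-4*lam) *\<^sub>R ((t*\<sigma> i^2) *\<^sub>R u i)
      + (2*lam^2) *\<^sub>R ((t^2*\<sigma> i^2) *\<^sub>R ((t*\<sigma> i) *\<^sub>R u i) + (t^2*\<sigma> i) *\<^sub>R ((t*\<sigma> i^2) *\<^sub>R u i))"
    unfolding g_def using i by (simp only: S_tu B_tu p_tu q_tu)
  also have "\<dots> = (-4*lam*(t*\<sigma> i^2) + 2*lam^2*(t^2*\<sigma> i^2*(t*\<sigma> i) + t^2*\<sigma> i*(t*\<sigma> i^2))) *\<^sub>R u i"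
    by (simp only: scaleR_scaleR scaleR_add_right scaleR_add_left distrib_left mult.assoc)
  also have "\<dots> = 0" by (simp only: z scaleR_zero_left)
  finally show ?thesis .
qed

lemma part1:
  assumes "gradient (R_soft lam S) x0 = 0"
  shows "lojasiewicz (R_soft lam S) (1/2) x0"
proof -
  have g0: "g x0 = 0" using assms by (simp add: grad_eq)
  from crit[OF g0] show ?thesis
  proof
    assume x0: "x0 = 0"
    have eig: "\<And>j. j \<in> I \<Longrightarrow> M x0 *v u j = (-4*lam*\<sigma> j^2) *\<^sub>R u j" using M_0 x0 by simp
    have nz: "-4*lam*\<sigma> j^2 \<noteq> 0" if j: "j \<in> I" for j using lam sig_pos[OF j] by simp
    obtain mm where "mm > 0" "\<forall>h. norm (M x0 *v h) \<ge> mm * norm h" using N_low[OF eig nz] by blast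
    then show ?thesis using loj_from[OF g0] by (simp add: M_mult)
  next
    assume "\<exists>i\<in>I. \<exists>t. x0 = t *\<^sub>R u i \<and> lam * t^2 * \<sigma> i = 1"
    then obtain i t where i: "i \<in> I" and x0: "x0 = t *\<^sub>R u i" and c: "lam * t^2 * \<sigma> i = 1" by blast
    define lv where "lv = (\<lambda>j. if j = i then 8*lam*\<sigma> i^2 else 2*lam*\<sigma> j*(\<sigma> i - \<sigma> j))"
    have eig: "\<And>j. j \<in> I \<Longrightarrow> M x0 *v u j = lv j *\<^sub>R u j" unfolding x0 lv_def using M_tu[OF i c] by blast
    have nz: "lv j \<noteq> 0" if j: "j \<in> I" for j
    proof (cases "j = i")
      case True then show ?thesis unfolding lv_def using lam sig_pos[OF i] by simp
    next
      case False
      then have "\<sigma> i \<noteq> \<sigma> j" using sig_inj[OF i j] by auto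
      then show ?thesis unfolding lv_def using False lam sig_pos[OF j] by simp
    qed
    obtain mm where "mm > 0" "\<forall>h. norm (M x0 *v h) \<ge> mm * norm h" using N_low[OF eig nz] by blast
    then show ?thesis using loj_from[OF g0] by (simp add: M_mult)
  qed
qed

end

lemma concave_min:
  fixes a x lo hi :: real
  assumes "lo \<le> x" "x \<le> hi"
  shows "x * (a - x) \<ge> min (hi * (a - hi)) (lo * (a - lo))"
proof (cases "x + lo \<le> a")
  case True
  have "x * (a - x) - lo * (a - lo) = (x - lo) * (a - x - lo)" by (simp add: algebra_simps)
  moreover have "(x - lo) * (a - x - lo) \<ge> 0" using True assms by simp
  ultimately show ?thesis by linarith
next
  case False
  have "x * (a - x) - hi * (a - hi) = (hi - x) * (x + hi - a)" by (simp add: algebra_simps)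
  moreover have "(hi - x) * (x + hi - a) \<ge> 0" using False assms by simp
  ultimately show ?thesis by linarith
qed


theorem proposition3:
  fixes lam :: real and S :: "real^'n^'n" and \<sigma> :: "nat \<Rightarrow> real"
    and u :: "nat \<Rightarrow> real^'n" and \<mu>star :: "real^'n" and m :: "real \<Rightarrow> real^'n"
  defines "d \<equiv> CARD('n)"
  assumes d2: "d \<ge> 2"
    and lam: "lam > 0"
    and sym: "transpose S = S"
    and spec_dec: "\<And>i j. 1 \<le> i \<Longrightarrow> i < j \<Longrightarrow> j \<le> d \<Longrightarrow> \<sigma> i > \<sigma> j"
    and spec_pos: "\<sigma> d > 0"
    and eigvec: "\<And>i. 1 \<le> i \<Longrightarrow> i \<le> d \<Longrightarrow> S *v u i = \<sigma> i *\<^sub>R u i \<and> norm (u i) = 1"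
    and star: "\<mu>star \<in> {(1 / sqrt (lam * \<sigma> 1)) *\<^sub>R u 1, - ((1 / sqrt (lam * \<sigma> 1)) *\<^sub>R u 1)}"
    and flow: "\<And>t. t \<ge> 0 \<Longrightarrow>
        (m has_vector_derivative (- gradient (R_soft lam S) (m t))) (at t within {0..})"
    and conv: "(m \<longlongrightarrow> \<mu>star) at_top"
  shows "(\<forall>\<mu>0. gradient (R_soft lam S) \<mu>0 = 0 \<longrightarrow> lojasiewicz (R_soft lam S) (1/2) \<mu>0)
    \<and> (\<exists>t0\<ge>0. \<exists>s>0. \<forall>t\<ge>t0.
          R_soft lam S (m t) - R_soft lam S \<mu>star
            \<le> (R_soft lam S (m t0) - R_soft lam S \<mu>star) * exp (- s * (t - t0)))
    \<and> (let st = 2 * lam * min (\<sigma> 2 * (\<sigma> 1 - \<sigma> 2)) (\<sigma> d * (\<sigma> 1 - \<sigma> d)) in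
         sigma_min (hessian (R_soft lam S) \<mu>star) = st \<and> st > 0 \<and>
         (\<exists>\<epsilon>0>0. \<forall>\<epsilon>. 0 < \<epsilon> \<and> \<epsilon> < \<epsilon>0 \<longrightarrow>
            (\<exists>t0>0. (\<lambda>t. norm (m t - \<mu>star)) \<in> O[at_top](\<lambda>t. exp (- (st - \<epsilon>) * (t - t0))))))"
proof -
  interpret R: rs2 lam S \<sigma> u d
    by unfold_locales (use sym d2 lam spec_dec spec_pos eigvec d_def in auto)
  have one: "1 \<in> R.I" and two: "2 \<in> R.I" and dI: "d \<in> R.I" using d2 by auto
  have s1: "\<sigma> 1 > 0" by (rule R.sig_pos[OF one])
  obtain t where mus: "\<mu>star = t *\<^sub>R u 1" and c: "lam * t^2 * \<sigma> 1 = 1"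
  proof -
    define t0 where "t0 = 1 / sqrt (lam * \<sigma> 1)"
    have "t0^2 = 1 / (lam * \<sigma> 1)" unfolding t0_def using lam s1 by (simp add: power_divide)
    then have c0: "lam * t0^2 * \<sigma> 1 = 1" using lam s1 by simp
    have c1: "lam * (-t0)^2 * \<sigma> 1 = 1" using c0 by simp
    from star have "\<mu>star = t0 *\<^sub>R u 1 \<or> \<mu>star = (-t0) *\<^sub>R u 1" unfolding t0_def by auto
    then show ?thesis using that c0 c1 by blast
  qed
  have gstar: "R.g \<mu>star = 0" unfolding mus by (rule R.g_tu[OF one c])
  have gradstar: "gradient (R_soft lam S) \<mu>star = 0" using gstar by (simp add: R.grad_eq)
  have flow': "\<And>t. t \<ge> 0 \<Longrightarrow> (m has_vector_derivative (- R.g (m t))) (at t within {0..})"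
    using flow by (simp add: R.grad_eq)
  have P1: "\<forall>\<mu>0. gradient (R_soft lam S) \<mu>0 = 0 \<longrightarrow> lojasiewicz (R_soft lam S) (1/2) \<mu>0"
    using R.part1 by blast
  have P2: "\<exists>t0\<ge>0. \<exists>s>0. \<forall>t\<ge>t0.
          R_soft lam S (m t) - R_soft lam S \<mu>star
            \<le> (R_soft lam S (m t0) - R_soft lam S \<mu>star) * exp (- s * (t - t0))"
    by (rule R.decay_f[OF flow' conv R.part1[OF gradstar]])
  define st where "st = 2 * lam * min (\<sigma> 2 * (\<sigma> 1 - \<sigma> 2)) (\<sigma> d * (\<sigma> 1 - \<sigma> d))"
  define lv where "lv = (\<lambda>j. if j = 1 then 8*lam*\<sigma> 1^2 else 2*lam*\<sigma> j*(\<sigma> 1 - \<sigma> j))"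
  have eig: "\<And>j. j \<in> R.I \<Longrightarrow> R.M \<mu>star *v u j = lv j *\<^sub>R u j"
    unfolding mus lv_def using R.M_tu[OF one c] by blast
  have s12: "\<sigma> 1 > \<sigma> 2" using spec_dec[of 1 2] d2 by simp
  have s1d: "\<sigma> 1 > \<sigma> d" using spec_dec[of 1 d] d2 by simp
  have s2: "\<sigma> 2 > 0" by (rule R.sig_pos[OF two])
  have sd: "\<sigma> d > 0" by (rule spec_pos)
  have stpos: "st > 0" unfolding st_def using lam s12 s1d s2 sd by simp
  have lv_ge: "lv j \<ge> st" if j: "j \<in> R.I" for j
  proof (cases "j = 1")
    case True
    have "\<sigma> 2 * (\<sigma> 1 - \<sigma> 2) \<le> \<sigma> 1 * \<sigma> 1" using s12 s2 by (intro mult_mono) auto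
    then have "st \<le> 2 * lam * (\<sigma> 1 * \<sigma> 1)" unfolding st_def using lam
      by (smt (verit) min.cobounded1 mult_left_mono)
    also have "\<dots> \<le> 8 * lam * \<sigma> 1^2" using lam by (simp add: power2_eq_square)
    finally show ?thesis using True unfolding lv_def by simp
  next
    case False
    have j2: "j \<ge> 2" using False j by simp
    have lo: "\<sigma> d \<le> \<sigma> j"
    proof (cases "j = d")
      case False then show ?thesis using spec_dec[of j d] j j2 by simp
    qed simp
    have hi: "\<sigma> j \<le> \<sigma> 2"
    proof (cases "j = 2")
      case False then show ?thesis using spec_dec[of 2 j] j j2 by simp
    qed simp
    have "\<sigma> j * (\<sigma> 1 - \<sigma> j) \<ge> min (\<sigma> 2 * (\<sigma> 1 - \<sigma> 2)) (\<sigma> d * (\<sigma> 1 - \<sigma> d))"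
      by (rule concave_min[OF lo hi])
    then have "2 * lam * (\<sigma> j * (\<sigma> 1 - \<sigma> j)) \<ge> st" unfolding st_def using lam
      by (simp add: mult_left_mono)
    then show ?thesis using False unfolding lv_def by (simp add: mult.assoc)
  qed
  have st_in: "st \<in> lv ` R.I"
  proof (cases "\<sigma> 2 * (\<sigma> 1 - \<sigma> 2) \<le> \<sigma> d * (\<sigma> 1 - \<sigma> d)")
    case True
    then have "st = lv 2" unfolding st_def lv_def by (simp add: min_def mult.assoc)
    then show ?thesis using two by blast
  next
    case False
    have "d \<noteq> 1" using d2 by simp
    then have "st = lv d" unfolding st_def lv_def using False by (simp add: min_def mult.assoc)
    then show ?thesis using dI by blast
  qed
  have smin: "sigma_min (hessian (R_soft lam S) \<mu>star) = st"
  proof -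
    have "sigma_min (hessian (R_soft lam S) \<mu>star) = Min (lv ` R.I)"
      unfolding sigma_min_def R.hess_eq using R.eigset[OF eig] by simp
    also have "\<dots> = st" by (rule Min_eqI) (use lv_ge st_in in auto)
    finally show ?thesis .
  qed
  have quad: "\<And>e. e \<bullet> R.L \<mu>star e \<ge> st * norm e ^ 2"
    unfolding R.M_mult[symmetric] by (rule R.N_quad_low[OF eig lv_ge])
  have P3: "\<exists>\<epsilon>0>0. \<forall>\<epsilon>. 0 < \<epsilon> \<and> \<epsilon> < \<epsilon>0 \<longrightarrow>
            (\<exists>t0>0. (\<lambda>t. norm (m t - \<mu>star)) \<in> O[at_top](\<lambda>t. exp (- (st - \<epsilon>) * (t - t0))))"
    using R.decay_x[OF flow' conv gstar quad] by (intro exI[of _ 1]) auto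
  show ?thesis unfolding Let_def st_def[symmetric] using P1 P2 P3 smin stpos by blast
qed

end
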